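(* Let $H$ be a group, $A$ either the empty set or a normal subgroup of $H$, and for $1\leq l\leq m$ let $\mathcal E_{l,m}$ be the subgroup generated by all $[x_1,\ldots,x_i]^{2^{m-i-k}}$ with $l\leq i\leq m$, $0\leq k\leq m-i$, $x_1,\ldots,x_i\in H$ and at least $k$ of the entries $x_{j_1},\ldots,x_{j_k}$ ($j_1<\cdots<j_k$) lying in $A$; write $\widetilde{\mathcal E}_{l,m}$ when $A=\varnothing$. Then for all $1\leq l\leq m$, $[\mathcal E_{l,m},H]\subseteq\mathcal E_{l+1,m+1}$ and $[\widetilde{\mathcal E}_{l,m},H]\subseteq\widetilde{\mathcal E}_{l+1,m+1}$.
   Context: $[a,b]=aba^{-1}b^{-1}$; right-normed iterated commutators $[x_1,\ldots,x_n]=[x_1,[x_2,\ldots,[x_{n-1},x_n]]]$. *)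

theory Defs
  imports "HOL-Algebra.Algebra"
begin

definition gcomm :: "('a, 'b) monoid_scheme \<Rightarrow> 'a \<Rightarrow> 'a \<Rightarrow> 'a" where
  "gcomm G a b = a \<otimes>\<^bsub>G\<^esub> b \<otimes>\<^bsub>G\<^esub> inv\<^bsub>G\<^esub> a \<otimes>\<^bsub>G\<^esub> inv\<^bsub>G\<^esub> b"

fun itcomm :: "('a, 'b) monoid_scheme \<Rightarrow> 'a list \<Rightarrow> 'a" where
  "itcomm G [] = \<one>\<^bsub>G\<^esub>"
| "itcomm G [x] = x"
| "itcomm G (x # y # xs) = gcomm G x (itcomm G (y # xs))"

definition comm_sub :: "('a, 'b) monoid_scheme \<Rightarrow> 'a set \<Rightarrow> 'a set \<Rightarrow> 'a set" where
  "comm_sub G S T = generate G {gcomm G x y | x y. x \<in> S \<and> y \<in> T}"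

definition E :: "('a, 'b) monoid_scheme \<Rightarrow> 'a set \<Rightarrow> nat \<Rightarrow> nat \<Rightarrow> 'a set" where
  "E G A l m = generate G
     {itcomm G xs [^]\<^bsub>G\<^esub> ((2::nat) ^ (m - i - k)) | xs i k.
        l \<le> i \<and> i \<le> m \<and> k \<le> m - i \<and> length xs = i \<and> set xs \<subseteq> carrier G \<and>
        k \<le> card {j. j < i \<and> xs ! j \<in> A}}"

end

theory Submission
  imports Defs
begin

context group
begin

lemma cancel1: "a \<in> carrier G \<Longrightarrow> x \<in> carrier G \<Longrightarrow> a \<otimes> (inv a \<otimes> x) = x"
  by (simp add: m_assoc[symmetric])
lemma cancel2: "a \<in> carrier G \<Longrightarrow> x \<in> carrier G \<Longrightarrow> inv a \<otimes> (a \<otimes> x) = x"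
  by (simp add: m_assoc[symmetric])

lemmas gs = m_assoc cancel1 cancel2 inv_mult_group

lemma gcomm_closed[simp]: "a \<in> carrier G \<Longrightarrow> b \<in> carrier G \<Longrightarrow> gcomm G a b \<in> carrier G"
  by (simp add: gcomm_def)

lemma itcomm_closed[simp]: "set xs \<subseteq> carrier G \<Longrightarrow> itcomm G xs \<in> carrier G"
  by (induction xs rule: induct_list012) auto

lemma gcomm_inv: "a \<in> carrier G \<Longrightarrow> b \<in> carrier G \<Longrightarrow> inv (gcomm G a b) = gcomm G b a"
  by (simp add: gcomm_def gs)

lemma gcomm_mult: "a \<in> carrier G \<Longrightarrow> b \<in> carrier G \<Longrightarrow> h \<in> carrier G \<Longrightarrow>
   gcomm G (a \<otimes> b) h = a \<otimes> gcomm G b h \<otimes> inv a \<otimes> gcomm G a h"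
  by (simp add: gcomm_def gs)

lemma gcomm_invl: "a \<in> carrier G \<Longrightarrow> h \<in> carrier G \<Longrightarrow>
   gcomm G (inv a) h = inv a \<otimes> inv (gcomm G a h) \<otimes> a"
  by (simp add: gcomm_def gs)

lemma gcomm_sq: "a \<in> carrier G \<Longrightarrow> h \<in> carrier G \<Longrightarrow>
   gcomm G (a \<otimes> a) h = gcomm G a (gcomm G a h) \<otimes> gcomm G a h \<otimes> gcomm G a h"
  by (simp add: gcomm_def gs)

lemma sq_mult: "a \<in> carrier G \<Longrightarrow> b \<in> carrier G \<Longrightarrow>
   (a \<otimes> b) \<otimes> (a \<otimes> b) = (a \<otimes> a) \<otimes> gcomm G (inv a) b \<otimes> (b \<otimes> b)"
  by (simp add: gcomm_def gs)

lemma conj_gcomm: "g \<in> carrier G \<Longrightarrow> a \<in> carrier G \<Longrightarrow> b \<in> carrier G \<Longrightarrow>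
   g \<otimes> gcomm G a b \<otimes> inv g = gcomm G (g \<otimes> a \<otimes> inv g) (g \<otimes> b \<otimes> inv g)"
  by (simp add: gcomm_def gs)

lemma conj_pow: "g \<in> carrier G \<Longrightarrow> a \<in> carrier G \<Longrightarrow>
   g \<otimes> a [^] (n::nat) \<otimes> inv g = (g \<otimes> a \<otimes> inv g) [^] n"
proof (induction n)
  case 0 then show ?case by simp
next
  case (Suc n)
  have "g \<otimes> a [^] Suc n \<otimes> inv g = (g \<otimes> a [^] n \<otimes> inv g) \<otimes> (g \<otimes> a \<otimes> inv g)"
    using Suc.prems by (simp add: gs)
  then show ?case using Suc by simp
qed

lemma conj_itcomm: "g \<in> carrier G \<Longrightarrow> xs \<noteq> [] \<Longrightarrow> set xs \<subseteq> carrier G \<Longrightarrow>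
   g \<otimes> itcomm G xs \<otimes> inv g = itcomm G (map (\<lambda>x. g \<otimes> x \<otimes> inv g) xs)"
  proof (induction xs rule: induct_list012)
  case (3 x y zs)
  then have "g \<otimes> itcomm G (x # y # zs) \<otimes> inv g = gcomm G (g \<otimes> x \<otimes> inv g) (g \<otimes> itcomm G (y # zs) \<otimes> inv g)"
    by (simp add: conj_gcomm)
  then show ?case using 3 by simp
qed auto

end

definition Egen :: "('a, 'b) monoid_scheme \<Rightarrow> 'a set \<Rightarrow> nat \<Rightarrow> nat \<Rightarrow> 'a set" where
  "Egen G A l m =
     {itcomm G xs [^]\<^bsub>G\<^esub> ((2::nat) ^ (m - i - k)) | xs i k.
        l \<le> i \<and> i \<le> m \<and> k \<le> m - i \<and> length xs = i \<and> set xs \<subseteq> carrier G \<and>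
        k \<le> card {j. j < i \<and> xs ! j \<in> A}}"

lemma E_Egen: "E G A l m = generate G (Egen G A l m)"
  unfolding E_def Egen_def by simp

lemma EgenI: "l \<le> i \<Longrightarrow> i \<le> m \<Longrightarrow> k \<le> m - i \<Longrightarrow> length xs = i \<Longrightarrow> set xs \<subseteq> carrier G \<Longrightarrow>
   k \<le> card {j. j < i \<and> xs ! j \<in> A} \<Longrightarrow> itcomm G xs [^]\<^bsub>G\<^esub> ((2::nat) ^ (m - i - k)) \<in> Egen G A l m"
  unfolding Egen_def by blast

lemma comm_subI: "x \<in> S \<Longrightarrow> y \<in> T \<Longrightarrow> gcomm G x y \<in> comm_sub G S T"
  unfolding comm_sub_def by (rule generate.incl) blast

context group
begin

lemma Egen_sub: "Egen G A l m \<subseteq> carrier G"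
  unfolding Egen_def by auto

lemma E_subgroup: "subgroup (E G A l m) G"
  unfolding E_Egen by (rule generate_is_subgroup[OF Egen_sub])

lemma E_carrier: "E G A l m \<subseteq> carrier G"
  using E_subgroup subgroup.subset by blast

lemma E_mono: "l \<le> l' \<Longrightarrow> E G A l' m \<subseteq> E G A l m"
  unfolding E_Egen by (rule mono_generate) (unfold Egen_def, blast intro: order_trans)

lemma normal_generate:
  assumes S: "S \<subseteq> carrier G" and c: "\<And>g x. g \<in> carrier G \<Longrightarrow> x \<in> S \<Longrightarrow> g \<otimes> x \<otimes> inv g \<in> S"
  shows "generate G S \<lhd> G"
proof -
  have "g \<otimes> x \<otimes> inv g \<in> generate G S" if g: "g \<in> carrier G" and x: "x \<in> generate G S" for g x
    using x
  proof (induction rule: generate.induct)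
    case one then show ?case using g by (simp add: generate.one)
  next
    case (incl h) then show ?case using c g by (simp add: generate.incl)
  next
    case (inv h)
    have "g \<otimes> inv h \<otimes> inv g = inv (g \<otimes> h \<otimes> inv g)" using g inv S by (auto simp: gs)
    then show ?case using inv c g by (simp add: generate.inv)
  next
    case (eng h1 h2)
    have "h1 \<in> carrier G" "h2 \<in> carrier G" using eng generate_incl[OF S] by auto
    then have "g \<otimes> (h1 \<otimes> h2) \<otimes> inv g = (g \<otimes> h1 \<otimes> inv g) \<otimes> (g \<otimes> h2 \<otimes> inv g)" using g by (simp add: gs)
    then show ?case using eng by (simp add: generate.eng)
  qed
  then show ?thesis using normal_inv_iff generate_is_subgroup[OF S] by blast
qed

lemma A_conj:
  assumes A: "A = {} \<or> A \<lhd> G" and g: "g \<in> carrier G" and y: "y \<in> carrier G"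
  shows "(g \<otimes> y \<otimes> inv g \<in> A) = (y \<in> A)"
proof (cases "A = {}")
  case False
  then have N: "A \<lhd> G" using A by blast
  show ?thesis
  proof
    assume "g \<otimes> y \<otimes> inv g \<in> A"
    then have "inv g \<otimes> (g \<otimes> y \<otimes> inv g) \<otimes> inv (inv g) \<in> A" using normal_invE(2)[OF N, of "inv g"] g by simp
    moreover have "inv g \<otimes> (g \<otimes> y \<otimes> inv g) \<otimes> inv (inv g) = y" using g y by (simp add: gs)
    ultimately show "y \<in> A" by simp
  next
    assume "y \<in> A" then show "g \<otimes> y \<otimes> inv g \<in> A" using normal_invE(2)[OF N] g by simp
  qed
qed simp

lemma E_normal:
  assumes A: "A = {} \<or> A \<lhd> G" and l: "1 \<le> l"
  shows "E G A l m \<lhd> G"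
  unfolding E_Egen
proof (rule normal_generate[OF Egen_sub])
  fix g x assume g: "g \<in> carrier G" and x: "x \<in> Egen G A l m"
  then obtain xs i k where xdef: "x = itcomm G xs [^] ((2::nat) ^ (m - i - k))" and
    c: "l \<le> i" "i \<le> m" "k \<le> m - i" "length xs = i" "set xs \<subseteq> carrier G"
       "k \<le> card {j. j < i \<and> xs ! j \<in> A}"
    unfolding Egen_def by blast
  define ys where "ys = map (\<lambda>x. g \<otimes> x \<otimes> inv g) xs"
  have ne: "xs \<noteq> []" using c l by auto
  have 1: "g \<otimes> x \<otimes> inv g = itcomm G ys [^] ((2::nat) ^ (m - i - k))"
    unfolding xdef ys_def using conj_pow[OF g, of "itcomm G xs"] conj_itcomm[OF g ne] c by simp
  have "{j. j < i \<and> ys ! j \<in> A} = {j. j < i \<and> xs ! j \<in> A}"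
  proof -
    have "\<And>j. j < i \<Longrightarrow> (ys ! j \<in> A) = (xs ! j \<in> A)"
      unfolding ys_def using c A_conj[OF A g] by (auto simp: subset_iff)
    then show ?thesis by blast
  qed
  moreover have "set ys \<subseteq> carrier G" "length ys = i" using c g by (auto simp: ys_def)
  ultimately show "g \<otimes> x \<otimes> inv g \<in> Egen G A l m" unfolding 1 using c by (intro EgenI) auto
qed

end


context group
begin

lemma pow1: "x \<in> carrier G \<Longrightarrow> x [^] (1::nat) = x"
  using nat_pow_Suc[of x 0] by (simp add: One_nat_def)

lemma main:
  assumes A: "A = {} \<or> A \<lhd> G"
  shows "1 \<le> l \<Longrightarrow> l \<le> m \<Longrightarrow> comm_sub G (E G A l m) (carrier G) \<subseteq> E G A (l+1) (m+1)"
proof (induction "2*m-l" arbitrary: l m rule: less_induct)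
  case less
  let ?N = "E G A (l+1) (m+1)"
  have Nn: "?N \<lhd> G" using E_normal[OF A] less.prems by simp
  have Ns: "subgroup ?N G" by (rule E_subgroup)
  have key: "gcomm G y h \<in> ?N" if y: "y \<in> Egen G A l m" and h: "h \<in> carrier G" for y h
  proof -
    obtain xs i k where ydef: "y = itcomm G xs [^] ((2::nat) ^ (m - i - k))" and
      c: "l \<le> i" "i \<le> m" "k \<le> m - i" "length xs = i" "set xs \<subseteq> carrier G"
         "k \<le> card {j. j < i \<and> xs ! j \<in> A}"
      using y unfolding Egen_def by blast
    have ne: "xs \<noteq> []" using c less.prems by auto
    have cc: "itcomm G xs \<in> carrier G" using c by simp
    show ?thesis
    proof (cases "m - i - k = 0")
      case True
      have y1: "y = itcomm G xs" using True ydef pow1[OF cc] by simp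
      have hx: "itcomm G (h # xs) = gcomm G h (itcomm G xs)" using ne by (cases xs) auto
      have sub: "Suc ` {j. j < i \<and> xs ! j \<in> A} \<subseteq> {j. j < i + 1 \<and> (h # xs) ! j \<in> A}" by auto
      have "card (Suc ` {j. j < i \<and> xs ! j \<in> A}) \<le> card {j. j < i + 1 \<and> (h # xs) ! j \<in> A}"
        by (rule card_mono[OF _ sub]) simp
      moreover have "card (Suc ` {j. j < i \<and> xs ! j \<in> A}) = card {j. j < i \<and> xs ! j \<in> A}"
        by (rule card_image) simp
      ultimately have kc: "k \<le> card {j. j < i + 1 \<and> (h # xs) ! j \<in> A}" using c(6) by linarith
      have hxs: "set (h # xs) \<subseteq> carrier G" using c h by simp
      have "itcomm G (h # xs) [^] ((2::nat) ^ ((m+1) - (i+1) - k)) \<in> Egen G A (l+1) (m+1)"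
        by (rule EgenI[OF _ _ _ _ hxs kc]) (use c in simp_all)
      moreover have "(2::nat) ^ ((m+1) - (i+1) - k) = 1" using True by simp
      moreover have "itcomm G (h # xs) [^] (1::nat) = itcomm G (h # xs)" using hxs by (intro pow1) simp
      ultimately have "itcomm G (h # xs) \<in> Egen G A (l+1) (m+1)" by simp
      then have "itcomm G (h # xs) \<in> ?N" unfolding E_Egen by (rule generate.incl)
      then have "gcomm G h y \<in> ?N" unfolding y1 hx .
      then have "inv (gcomm G h y) \<in> ?N" by (rule subgroup.m_inv_closed[OF Ns])
      moreover have "inv (gcomm G h y) = gcomm G y h" unfolding y1 by (rule gcomm_inv[OF h cc])
      ultimately show ?thesis by simp
    next
      case False
      define y' where "y' = itcomm G xs [^] ((2::nat) ^ ((m - 1) - i - k))"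
      have y'c: "y' \<in> carrier G" using cc y'_def by simp
      obtain d where d: "m - i - k = Suc d" using False by (cases "m - i - k") auto
      have d2: "(m - 1) - i - k = d" using d by simp
      have "(2::nat) ^ ((m - 1) - i - k) + 2 ^ ((m - 1) - i - k) = 2 ^ (m - i - k)"
        unfolding d d2 by simp
      then have yy: "y = y' \<otimes> y'" unfolding ydef y'_def using nat_pow_mult[OF cc, of "2 ^ ((m - 1) - i - k)" "2 ^ ((m - 1) - i - k)"] by simp
      have "y' \<in> Egen G A l (m - 1)" unfolding y'_def using c False by (intro EgenI) auto
      then have y'E: "y' \<in> E G A l (m - 1)" unfolding E_Egen by (rule generate.incl)
      define u where "u = gcomm G y' h"
      have IH1: "comm_sub G (E G A l (m - 1)) (carrier G) \<subseteq> E G A (l+1) (m - 1 + 1)"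
        by (rule less.hyps) (use False c less.prems in auto)
      have m1: "m - 1 + 1 = m" using False by simp
      have uE: "u \<in> E G A (l+1) m" using IH1 comm_subI[OF y'E h] unfolding u_def m1 by blast
      have IH2: "comm_sub G (E G A (l+1) m) (carrier G) \<subseteq> E G A (l+1+1) (m+1)"
        by (rule less.hyps) (use False c less.prems in auto)
      have mono: "E G A (l+1+1) (m+1) \<subseteq> ?N" by (rule E_mono) simp
      have C2: "gcomm G a b \<in> ?N" if "a \<in> E G A (l+1) m" "b \<in> carrier G" for a b
        using comm_subI[OF that] IH2 mono by blast
      have sqgen: "x \<otimes> x \<in> ?N" if x: "x \<in> Egen G A (l+1) m" for x
      proof -
        obtain zs i' k' where xdef: "x = itcomm G zs [^] ((2::nat) ^ (m - i' - k'))" and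
          c': "l+1 \<le> i'" "i' \<le> m" "k' \<le> m - i'" "length zs = i'" "set zs \<subseteq> carrier G"
             "k' \<le> card {j. j < i' \<and> zs ! j \<in> A}"
          using x unfolding Egen_def by blast
        have zc: "itcomm G zs \<in> carrier G" using c' by simp
        have "(2::nat) ^ (m - i' - k') + 2 ^ (m - i' - k') = 2 ^ ((m + 1) - i' - k')"
          using c' by (simp add: Suc_diff_le)
        then have "x \<otimes> x = itcomm G zs [^] ((2::nat) ^ ((m + 1) - i' - k'))"
          unfolding xdef using nat_pow_mult[OF zc, of "2 ^ (m - i' - k')" "2 ^ (m - i' - k')"] by simp
        also have "\<dots> \<in> Egen G A (l+1) (m+1)" using c' by (intro EgenI) auto
        finally show ?thesis unfolding E_Egen by (rule generate.incl)
      qed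
      have sq0: "a \<otimes> a \<in> ?N" if a: "a \<in> generate G (Egen G A (l+1) m)" for a
        using a
      proof (induction rule: generate.induct)
        case one then show ?case using subgroup.one_closed[OF Ns] by simp
      next
        case (incl x) then show ?case by (rule sqgen)
      next
        case (inv x)
        have xc: "x \<in> carrier G" using inv Egen_sub by blast
        have "inv x \<otimes> inv x = inv (x \<otimes> x)" using xc by (simp add: gs)
        moreover have "inv (x \<otimes> x) \<in> ?N" by (rule subgroup.m_inv_closed[OF Ns sqgen[OF inv]])
        ultimately show ?case by simp
      next
        case (eng a b)
        have ab: "a \<in> E G A (l+1) m" "b \<in> E G A (l+1) m" using eng.hyps unfolding E_Egen by auto
        have abc: "a \<in> carrier G" "b \<in> carrier G" using ab E_carrier by auto
        have "inv a \<in> E G A (l+1) m" by (rule subgroup.m_inv_closed[OF E_subgroup ab(1)])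
        then have "gcomm G (inv a) b \<in> ?N" using abc(2) by (rule C2)
        then have "(a \<otimes> a) \<otimes> gcomm G (inv a) b \<in> ?N"
          by (rule subgroup.m_closed[OF Ns eng.IH(1)])
        then have "(a \<otimes> a) \<otimes> gcomm G (inv a) b \<otimes> (b \<otimes> b) \<in> ?N"
          by (rule subgroup.m_closed[OF Ns _ eng.IH(2)])
        then show ?case unfolding sq_mult[OF abc] .
      qed
      have sq: "a \<otimes> a \<in> ?N" if a: "a \<in> E G A (l+1) m" for a
        using sq0 a unfolding E_Egen[of G A "l+1" m] by blast
      have uc: "u \<in> carrier G" using uE E_carrier by blast
      have "gcomm G u y' \<in> ?N" using C2[OF uE y'c] .
      then have "inv (gcomm G u y') \<in> ?N" by (rule subgroup.m_inv_closed[OF Ns])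
      then have "gcomm G y' u \<in> ?N" unfolding gcomm_inv[OF uc y'c] .
      then have "gcomm G y' u \<otimes> (u \<otimes> u) \<in> ?N"
        by (rule subgroup.m_closed[OF Ns _ sq[OF uE]])
      then have "gcomm G y' u \<otimes> u \<otimes> u \<in> ?N"
        using m_assoc[OF _ uc uc] uc y'c gcomm_closed by simp
      moreover have "gcomm G y h = gcomm G y' u \<otimes> u \<otimes> u" unfolding yy u_def by (rule gcomm_sq[OF y'c h])
      ultimately show ?thesis by simp
    qed
  qed
  have all0: "\<forall>h\<in>carrier G. gcomm G y h \<in> ?N" if "y \<in> generate G (Egen G A l m)" for y
    using that
  proof (induction rule: generate.induct)
    case one
    have "gcomm G \<one> h = \<one>" if "h \<in> carrier G" for h using that by (simp add: gcomm_def)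
    then show ?case using subgroup.one_closed[OF Ns] by simp
  next
    case (incl y) then show ?case using key by simp
  next
    case (inv y)
    have yc: "y \<in> carrier G" using inv Egen_sub by blast
    show ?case
    proof
      fix h assume h: "h \<in> carrier G"
      have "inv (gcomm G y h) \<in> ?N" by (rule subgroup.m_inv_closed[OF Ns key[OF inv h]])
      then have "inv y \<otimes> inv (gcomm G y h) \<otimes> inv (inv y) \<in> ?N" by (rule normal_invE(2)[OF Nn inv_closed[OF yc]])
      then show "gcomm G (inv y) h \<in> ?N" using gcomm_invl[OF yc h] yc by simp
    qed
  next
    case (eng a b)
    have abc: "a \<in> carrier G" "b \<in> carrier G" using eng generate_incl[OF Egen_sub] by blast+
    show ?case
    proof
      fix h assume h: "h \<in> carrier G"
      have "a \<otimes> gcomm G b h \<otimes> inv a \<in> ?N" using eng.IH(2) h by (intro normal_invE(2)[OF Nn abc(1)]) blast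
      moreover have "gcomm G a h \<in> ?N" using eng.IH(1) h by blast
      ultimately have "a \<otimes> gcomm G b h \<otimes> inv a \<otimes> gcomm G a h \<in> ?N"
        by (rule subgroup.m_closed[OF Ns])
      then show "gcomm G (a \<otimes> b) h \<in> ?N" using gcomm_mult[OF abc h] by simp
    qed
  qed
  have all: "\<forall>h\<in>carrier G. gcomm G y h \<in> ?N" if "y \<in> E G A l m" for y
    using all0 that unfolding E_Egen[of G A l m] by blast
  show ?case unfolding comm_sub_def
    by (rule generate_subgroup_incl[OF _ Ns]) (use all in blast)
qed

end

theorem corollary5p8:
  fixes H (structure) and A :: "'a set"
  assumes "group H"
    and "A = {} \<or> A \<lhd> H"
  shows "\<forall>l m. 1 \<le> l \<and> l \<le> m \<longrightarrow>
           comm_sub H (E H A l m) (carrier H) \<subseteq> E H A (l + 1) (m + 1) \<and>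
           comm_sub H (E H {} l m) (carrier H) \<subseteq> E H {} (l + 1) (m + 1)"
proof (intro allI impI conjI)
  fix l m :: nat assume lm: "1 \<le> l \<and> l \<le> m"
  show "comm_sub H (E H A l m) (carrier H) \<subseteq> E H A (l + 1) (m + 1)"
    using group.main[OF assms(1) assms(2)] lm by blast
  show "comm_sub H (E H {} l m) (carrier H) \<subseteq> E H {} (l + 1) (m + 1)"
    using group.main[OF assms(1), of "{}"] lm by blast
qed

end
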